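(* Let $n\ge 1$ and $0\le p\le n-1$. The set $\mathcal{D}_p$ of permutations of $[n]$ at distance exactly $p$ from the identity (i.e., obtainable from $12\cdots n$ by $p$ right-jumps but not by fewer) is exactly the set of permutations of $[n]$ having exactly $p$ non-left-to-right-maxima. Consequently, the number $d_{n,p}$ of such permutations equals the signless Stirling number of the first kind $s(n,n-p)$ (the number of permutations of $[n]$ with exactly $n-p$ cycles), and $$d_{n,p}=\sum_{0\le j\le h\le p}(-1)^j\binom{h}{j}\binom{n-1+h}{p+h}\binom{n+p}{p-h}\frac{(j-h)^{p+h}}{h!}.$$
   Context: Permutations of $[n]=\{1,\dots,n\}$ are written as words $\sigma=\sigma_1\sigma_2\cdots\sigma_n$. A right-jump transforms $\sigma$ into $\sigma_1\cdots\sigma_{i-1}\sigma_{i+1}\cdots\sigma_j\sigma_i\sigma_{j+1}\cdots\sigma_n$ for some $1\le i<j\le n$. A left-to-right maximum of $\sigma$ is an entry $\sigma_i$ such that $\sigma_k<\sigma_i$ for all $k<i$; every other entry is called a non-left-to-right-maximum. *)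

theory Defs
  imports Complex_Main "HOL-Combinatorics.Stirling" "HOL-Combinatorics.Multiset_Permutations"
begin

text \<open>Permutations of [n] are words: lists xs with distinct xs and set xs = {1..n}
  (library: permutations_of_set {1..n}).  Positions are 0-indexed.\<close>

text \<open>Right-jump at (0-indexed) positions i < j: the entry at position i is removed
  and reinserted directly after the entry originally at position j.\<close>
definition right_jump :: "'a list \<Rightarrow> nat \<Rightarrow> nat \<Rightarrow> 'a list" where
  "right_jump xs i j = take i xs @ take (j - i) (drop (Suc i) xs) @ [xs ! i] @ drop (Suc j) xs"

definition rj_step :: "'a list \<Rightarrow> 'a list \<Rightarrow> bool" where
  "rj_step xs ys \<longleftrightarrow> (\<exists>i j. i < j \<and> j < length xs \<and> ys = right_jump xs i j)"

definition id_perm :: "nat \<Rightarrow> nat list" where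
  "id_perm n = [1..<Suc n]"

definition D :: "nat \<Rightarrow> nat \<Rightarrow> nat list set" where
  "D n p = {\<sigma> \<in> permutations_of_set {1..n}.
              (rj_step ^^ p) (id_perm n) \<sigma> \<and> (\<forall>k<p. \<not> (rj_step ^^ k) (id_perm n) \<sigma>)}"

definition non_lrmax :: "nat list \<Rightarrow> nat" where
  "non_lrmax xs = card {i. i < length xs \<and> \<not> (\<forall>k<i. xs ! k < xs ! i)}"

end

theory Submission
  imports Defs "HOL-Computational_Algebra.Polynomial"
begin


fun g :: "nat set \<Rightarrow> nat list \<Rightarrow> nat" where
  "g S [] = 0"
| "g S (x#xs) = (if (\<forall>y\<in>S. y < x) then 0 else 1) + g (insert x S) xs"

fun lr :: "nat set \<Rightarrow> nat list \<Rightarrow> nat" where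
  "lr S [] = 0"
| "lr S (x#xs) = (if (\<forall>y\<in>S. y < x) then 1 else 0) + lr (insert x S) xs"

lemma g_lr: "g S xs + lr S xs = length xs"
  by (induct xs arbitrary: S) auto

lemma g_append: "g S (xs @ ys) = g S xs + g (S \<union> set xs) ys"
  by (induct xs arbitrary: S) auto

lemma lr_append: "lr S (xs @ ys) = lr S xs + lr (S \<union> set xs) ys"
  by (induct xs arbitrary: S) auto

lemma g_mono: "S \<subseteq> T \<Longrightarrow> g S xs \<le> g T xs"
proof (induct xs arbitrary: S T)
  case Nil then show ?case by simp
next
  case (Cons x xs)
  have "g (insert x S) xs \<le> g (insert x T) xs" using Cons by (meson insert_mono)
  moreover have "(if (\<forall>y\<in>S. y < x) then 0 else 1) \<le> (if (\<forall>y\<in>T. y < x) then 0 else (1::nat))"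
    using Cons.prems by auto
  ultimately show ?case by simp
qed

lemma g_absorb: "x < b \<Longrightarrow> b \<in> T \<Longrightarrow> g (insert x T) L = g T L"
proof (induct L arbitrary: T)
  case Nil then show ?case by simp
next
  case (Cons z L)
  have e: "(\<forall>y\<in>insert x T. y < z) = (\<forall>y\<in>T. y < z)" using Cons.prems by auto
  have "g (insert x (insert z T)) L = g (insert z T) L"
    using Cons by blast
  then have "g (insert z (insert x T)) L = g (insert z T) L"
    by (simp only: insert_commute)
  then show ?case using e by simp
qed

lemma g_zero_iff: "g S xs = 0 \<longleftrightarrow> sorted_wrt (<) xs \<and> (\<forall>y\<in>S. \<forall>x\<in>set xs. y < x)"
  proof (induct xs arbitrary: S)
  case Nil then show ?case by simp
next
  case (Cons a xs)
  show ?case using Cons[of "insert a S"] by auto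
qed

lemma card_sum_filter: "card {i. i < (n::nat) \<and> P i} = (\<Sum>i<n. if P i then 1 else 0)"
proof -
  have "{i. i < n \<and> P i} = {i\<in>{..<n}. P i}" by auto
  then have "card {i. i < n \<and> P i} = (\<Sum>i\<in>{i\<in>{..<n}. P i}. 1)" by (simp only: card_eq_sum)
  also have "\<dots> = (\<Sum>i<n. if P i then 1 else 0)" using sum.inter_filter[of "{..<n}" "\<lambda>_. 1::nat" P] by simp
  finally show ?thesis .
qed

lemma nlr_g_gen: "card {i. i < length xs \<and> \<not> ((\<forall>y\<in>S. y < xs!i) \<and> (\<forall>k<i. xs!k < xs!i))} = g S xs"
proof (induct xs arbitrary: S)
  case Nil then show ?case by simp
next
  case (Cons x xs)
  have "card {i. i < length (x#xs) \<and> \<not> ((\<forall>y\<in>S. y < (x#xs)!i) \<and> (\<forall>k<i. (x#xs)!k < (x#xs)!i))}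
     = (\<Sum>i<Suc (length xs). if \<not> ((\<forall>y\<in>S. y < (x#xs)!i) \<and> (\<forall>k<i. (x#xs)!k < (x#xs)!i)) then 1 else 0)"
    by (simp add: card_sum_filter)
  also have "\<dots> = (if (\<forall>y\<in>S. y < x) then 0 else 1) +
     (\<Sum>i<length xs. if \<not> ((\<forall>y\<in>insert x S. y < xs!i) \<and> (\<forall>k<i. xs!k < xs!i)) then 1 else 0)"
    unfolding sum.lessThan_Suc_shift
    by (simp add: All_less_Suc2)
  also have "\<dots> = (if (\<forall>y\<in>S. y < x) then 0 else 1) + g (insert x S) xs"
    using Cons[of "insert x S"] by (simp add: card_sum_filter)
  finally show ?case by simp
qed

lemma nlr_g: "non_lrmax xs = g {} xs"
  unfolding non_lrmax_def using nlr_g_gen[of xs "{}"] by simp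


lemma g_jump_le: "g S (A @ B @ a # C) \<le> g S (A @ a # B @ C) + 1"
proof -
  have m: "g (S \<union> set A) B \<le> g (insert a (S \<union> set A)) B" by (rule g_mono) auto
  have "g (S \<union> set A \<union> set B) [a] \<le> 1" by simp
  then show ?thesis using m
    by (simp add: g_append Un_assoc Un_commute Un_left_commute insert_commute)
qed

lemma rj_decomp:
  assumes "i < j" "j < length xs"
  shows "xs = take i xs @ [xs!i] @ take (j-i) (drop (Suc i) xs) @ drop (Suc j) xs"
proof -
  have "drop (Suc i) xs = take (j-i) (drop (Suc i) xs) @ drop (j-i) (drop (Suc i) xs)" by (simp only: append_take_drop_id)
  moreover have "drop (j-i) (drop (Suc i) xs) = drop ((j-i) + Suc i) xs" by (simp only: drop_drop)
  moreover have "(j-i) + Suc i = Suc j" using assms by simp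
  ultimately have "drop (Suc i) xs = take (j-i) (drop (Suc i) xs) @ drop (Suc j) xs" by metis
  moreover have "xs = take i xs @ xs!i # drop (Suc i) xs" using assms by (simp add: id_take_nth_drop)
  ultimately show ?thesis by simp
qed

lemma g_rj: assumes "rj_step xs ys" shows "g S ys \<le> g S xs + 1"
proof -
  obtain i j where ij: "i < j" "j < length xs" "ys = right_jump xs i j"
    using assms unfolding rj_step_def by blast
  define A where "A = take i xs"
  define B where "B = take (j-i) (drop (Suc i) xs)"
  define C where "C = drop (Suc j) xs"
  have xs: "xs = A @ xs!i # B @ C" using rj_decomp[OF ij(1,2)] unfolding A_def B_def C_def by simp
  have ys: "ys = A @ B @ xs!i # C" using ij(3) unfolding right_jump_def A_def B_def C_def by simp
  show ?thesis using g_jump_le[of S A B "xs!i" C] xs ys by simp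
qed

lemma g_id: "g {} (id_perm n) = 0"
  unfolding id_perm_def by (simp add: g_zero_iff del: upt_Suc)

lemma reach_le: "(rj_step ^^ k) (id_perm n) \<sigma> \<Longrightarrow> g {} \<sigma> \<le> k"
proof (induct k arbitrary: \<sigma>)
  case 0 then show ?case by (auto elim: relpowp_0_E simp: g_id)
next
  case (Suc k)
  from Suc.prems obtain y where "(rj_step ^^ k) (id_perm n) y" "rj_step y \<sigma>" by (rule relpowp_Suc_E)
  then show ?case using Suc.hyps g_rj[of y \<sigma> "{}"] by fastforce
qed

lemma g_pos_split: "0 < g S xs \<Longrightarrow> \<exists>P x C. xs = P @ x # C \<and> \<not> (\<forall>y\<in>S \<union> set P. y < x)"
proof (induct xs arbitrary: S)
  case Nil then show ?case by simp
next
  case (Cons a xs)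
  show ?case
  proof (cases "\<forall>y\<in>S. y < a")
    case False then show ?thesis by (intro exI[of _ "[]"]) auto
  next
    case True
    then have "0 < g (insert a S) xs" using Cons.prems by simp
    then obtain P x C where "xs = P @ x # C" "\<not> (\<forall>y\<in>insert a S \<union> set P. y < x)"
      using Cons.hyps by blast
    then show ?thesis by (intro exI[of _ "a#P"] exI[of _ x] exI[of _ C]) auto
  qed
qed

lemma g_key:
  assumes "\<forall>y\<in>S \<union> set A. y < x" "x < b"
  shows "g S (A @ b # B @ x # C) = Suc (g S (A @ x # b # B @ C))"
proof -
  have 1: "g (S \<union> set A) (b # B @ x # C) = g (S \<union> set A) (b # B) + 1 + g (insert x (insert b (S \<union> set A \<union> set B))) C"
    using assms by (simp add: g_append Un_assoc insert_commute)
  have ab: "g (insert b (insert x (S \<union> set A))) B = g (insert b (S \<union> set A)) B"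
    using g_absorb[of x b "insert b (S \<union> set A)" B] assms by (simp add: insert_commute)
  have 2: "g (S \<union> set A) (x # b # B @ C) = g (S \<union> set A) (b # B) + g (insert x (insert b (S \<union> set A \<union> set B))) C"
    using assms ab by (simp add: g_append Un_assoc insert_commute)
  show ?thesis using 1 2 by (simp add: g_append)
qed

lemma step_back:
  assumes "\<sigma> \<in> permutations_of_set X" "g {} \<sigma> = Suc p"
  shows "\<exists>\<sigma>'. \<sigma>' \<in> permutations_of_set X \<and> g {} \<sigma>' = p \<and> rj_step \<sigma>' \<sigma>"
proof -
  obtain P x C where s: "\<sigma> = P @ x # C" and nx: "\<not> (\<forall>y\<in>set P. y < x)"
    using g_pos_split[of "{}" \<sigma>] assms(2) by auto
  define A where "A = takeWhile (\<lambda>y. y < x) P"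
  define R where "R = dropWhile (\<lambda>y. y < x) P"
  have PAR: "P = A @ R" unfolding A_def R_def by simp
  have "R \<noteq> []" using nx unfolding R_def by (simp add: dropWhile_eq_Nil_conv)
  then obtain b B where R: "R = b # B" by (cases R) auto
  have nb: "\<not> b < x" using R unfolding R_def
    by (metis dropWhile_eq_Cons_conv)
  have dist: "distinct \<sigma>" using assms(1) by (simp add: permutations_of_set_def)
  have "b \<noteq> x" using dist s PAR R by auto
  with nb have xb: "x < b" by simp
  have Ax: "\<forall>y\<in>set A. y < x" unfolding A_def by (auto dest: set_takeWhileD)
  define \<sigma>' where "\<sigma>' = A @ x # b # B @ C"
  have s2: "\<sigma> = A @ b # B @ x # C" using s PAR R by simp
  have gg: "g {} \<sigma> = Suc (g {} \<sigma>')" unfolding s2 \<sigma>'_def using g_key[of "{}" A x b B C] Ax xb by simp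
  have perm: "\<sigma>' \<in> permutations_of_set X"
    using assms(1) unfolding permutations_of_set_def s2 \<sigma>'_def by auto
  have "right_jump \<sigma>' (length A) (length A + length (b#B)) = \<sigma>"
    unfolding right_jump_def \<sigma>'_def s2 by simp
  moreover have "length A < length A + length (b#B)" by simp
  moreover have "length A + length (b#B) < length \<sigma>'" unfolding \<sigma>'_def by simp
  ultimately have "rj_step \<sigma>' \<sigma>" unfolding rj_step_def by blast
  then show ?thesis using perm gg assms(2) by auto
qed

lemma g0_id:
  assumes "\<sigma> \<in> permutations_of_set {1..n}" "g {} \<sigma> = 0"
  shows "\<sigma> = id_perm n"
proof -
  have "sorted_wrt (<) \<sigma>" using assms(2) by (simp add: g_zero_iff)
  then have "sorted \<sigma>" "distinct \<sigma>" by (simp_all add: strict_sorted_iff)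
  moreover have "set \<sigma> = set (id_perm n)" using assms(1) unfolding permutations_of_set_def id_perm_def
    by (simp add: atLeastLessThanSuc_atLeastAtMost del: upt_Suc)
  moreover have "sorted (id_perm n)" "distinct (id_perm n)" unfolding id_perm_def by (simp_all del: upt_Suc)
  ultimately show ?thesis using sorted_distinct_set_unique[of \<sigma> "id_perm n"] by simp
qed

lemma reach_ge:
  "\<sigma> \<in> permutations_of_set {1..n} \<Longrightarrow> g {} \<sigma> = p \<Longrightarrow> (rj_step ^^ p) (id_perm n) \<sigma>"
proof (induct p arbitrary: \<sigma>)
  case 0 then show ?case using g0_id by (auto intro: relpowp_0_I)
next
  case (Suc p)
  then obtain \<sigma>' where "\<sigma>' \<in> permutations_of_set {1..n}" "g {} \<sigma>' = p" "rj_step \<sigma>' \<sigma>"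
    using step_back by blast
  then show ?case using Suc.hyps by (blast intro: relpowp_Suc_I)
qed

lemma D_char: "D n p = {\<sigma> \<in> permutations_of_set {1..n}. non_lrmax \<sigma> = p}"
proof (intro equalityI subsetI)
  fix \<sigma> assume "\<sigma> \<in> D n p"
  then have s: "\<sigma> \<in> permutations_of_set {1..n}" "(rj_step ^^ p) (id_perm n) \<sigma>"
    "\<forall>k<p. \<not> (rj_step ^^ k) (id_perm n) \<sigma>" unfolding D_def by auto
  have "g {} \<sigma> \<le> p" using reach_le s(2) by blast
  moreover have "\<not> g {} \<sigma> < p" using reach_ge[OF s(1) refl] s(3) by blast
  ultimately show "\<sigma> \<in> {\<sigma> \<in> permutations_of_set {1..n}. non_lrmax \<sigma> = p}"
    using s(1) by (simp add: nlr_g)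
next
  fix \<sigma> assume "\<sigma> \<in> {\<sigma> \<in> permutations_of_set {1..n}. non_lrmax \<sigma> = p}"
  then have s: "\<sigma> \<in> permutations_of_set {1..n}" "g {} \<sigma> = p" by (auto simp: nlr_g)
  have "\<forall>k<p. \<not> (rj_step ^^ k) (id_perm n) \<sigma>" using reach_le s(2) by fastforce
  then show "\<sigma> \<in> D n p" unfolding D_def using reach_ge[OF s] s(1) by blast
qed



lemma lr_snoc: "lr {} (ys @ [x]) = lr {} ys + (if \<forall>y\<in>set ys. y < x then 1 else 0)"
  by (simp add: lr_append)

lemma max_char:
  assumes "finite A" "x \<in> A" "set ys = A - {x}"
  shows "(\<forall>y\<in>set ys. y < x) \<longleftrightarrow> x = Max A"
proof
  assume h: "\<forall>y\<in>set ys. y < x"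
  have "Max A \<in> A" using assms(1,2) by (intro Max_in) auto
  show "x = Max A"
  proof (rule ccontr)
    assume "x \<noteq> Max A"
    then have "Max A \<in> set ys" using assms(3) \<open>Max A \<in> A\<close> by simp
    then have "Max A < x" using h by blast
    moreover have "x \<le> Max A" using assms(1,2) by simp
    ultimately show False by simp
  qed
next
  assume "x = Max A"
  show "\<forall>y\<in>set ys. y < x"
  proof
    fix y assume "y \<in> set ys"
    then have "y \<in> A" "y \<noteq> x" using assms(3) by auto
    then have "y \<le> Max A" using assms(1) by simp
    then show "y < x" using \<open>y \<noteq> x\<close> \<open>x = Max A\<close> by simp
  qed
qed

lemma count_lr:
  "finite A \<Longrightarrow> card {xs \<in> permutations_of_set A. lr {} xs = k} = stirling (card A) k"
proof (induct "card A" arbitrary: A k)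
  case 0
  then have "A = {}" by simp
  then show ?case by (cases k) (auto simp: Collect_conv_if)
next
  case (Suc m)
  have fin: "finite A" by fact
  have ne: "A \<noteq> {}" using Suc.hyps(2) by auto
  define M where "M = Max A"
  have MA: "M \<in> A" unfolding M_def using fin ne by simp
  define T where "T x = {ys \<in> permutations_of_set (A - {x}). lr {} ys + (if x = M then 1 else 0) = k}" for x
  have eq: "{xs \<in> permutations_of_set A. lr {} xs = k} = (\<Union>x\<in>A. (\<lambda>ys. ys @ [x]) ` T x)"
  proof (intro equalityI subsetI)
    fix xs assume xs: "xs \<in> {xs \<in> permutations_of_set A. lr {} xs = k}"
    then have s: "set xs = A" "distinct xs" "lr {} xs = k" by (auto simp: permutations_of_set_def)
    then have "xs \<noteq> []" using ne by auto
    then have dec: "xs = butlast xs @ [last xs]" by simp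
    define x where "x = last xs"
    define ys where "ys = butlast xs"
    have d: "distinct (ys @ [x])" using s \<open>xs \<noteq> []\<close> unfolding x_def ys_def by simp
    have xA: "x \<in> A" using s(1) \<open>xs \<noteq> []\<close> unfolding x_def by auto
    have sys: "set ys = A - {x}" proof -
      have "set (ys @ [x]) = A" unfolding x_def ys_def using s(1) \<open>xs \<noteq> []\<close> by simp
      moreover have "x \<notin> set ys" using d by simp
      ultimately show ?thesis by auto
    qed
    have "ys \<in> permutations_of_set (A - {x})" using sys d by (auto simp: permutations_of_set_def)
    moreover have "lr {} ys + (if x = M then 1 else 0) = k"
      using s(3) dec lr_snoc[of ys x] max_char[OF fin xA sys] unfolding M_def x_def ys_def by simp
    ultimately have "ys \<in> T x" unfolding T_def by simp
    then show "xs \<in> (\<Union>x\<in>A. (\<lambda>ys. ys @ [x]) ` T x)" using xA dec unfolding x_def ys_def by blast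
  next
    fix xs assume "xs \<in> (\<Union>x\<in>A. (\<lambda>ys. ys @ [x]) ` T x)"
    then obtain x ys where xA: "x \<in> A" and ys: "ys \<in> T x" and xs: "xs = ys @ [x]" by blast
    have sys: "set ys = A - {x}" "distinct ys" using ys unfolding T_def permutations_of_set_def by auto
    have "lr {} xs = k" using ys xs lr_snoc[of ys x] max_char[OF fin xA sys(1)] unfolding T_def M_def by simp
    moreover have "xs \<in> permutations_of_set A" using sys xA xs by (auto simp: permutations_of_set_def)
    ultimately show "xs \<in> {xs \<in> permutations_of_set A. lr {} xs = k}" by simp
  qed
  have finT: "finite (T x)" for x unfolding T_def by simp
  have cardT: "card ((\<lambda>ys. ys @ [x]) ` T x) = card (T x)" for x
    by (rule card_image) (auto simp: inj_on_def)
  have disj: "\<forall>x\<in>A. \<forall>y\<in>A. x \<noteq> y \<longrightarrow> ((\<lambda>ys. ys @ [x]) ` T x) \<inter> ((\<lambda>ys. ys @ [y]) ` T y) = {}"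
    by auto
  have cm: "card (A - {x}) = m" if "x \<in> A" for x using Suc.hyps(2) that fin by simp
  have cT: "card (T x) = (if x = M then (if k = 0 then 0 else stirling m (k - 1)) else stirling m k)"
    if xA: "x \<in> A" for x
  proof (cases "x = M")
    case True
    show ?thesis
    proof (cases k)
      case 0 then show ?thesis using True unfolding T_def by simp
    next
      case (Suc k')
      have "T x = {ys \<in> permutations_of_set (A - {x}). lr {} ys = k'}" unfolding T_def using True Suc by auto
      then show ?thesis using Suc.hyps(1)[of "A - {x}" k'] cm[OF xA] fin True Suc by simp
    qed
  next
    case False
    have "T x = {ys \<in> permutations_of_set (A - {x}). lr {} ys = k}" unfolding T_def using False by auto
    then show ?thesis using Suc.hyps(1)[of "A - {x}" k] cm[OF xA] fin False by simp
  qed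
  have "card {xs \<in> permutations_of_set A. lr {} xs = k} = (\<Sum>x\<in>A. card (T x))"
    unfolding eq by (subst card_UN_disjoint) (use fin finT disj cardT in auto)
  also have "\<dots> = card (T M) + (\<Sum>x\<in>A - {M}. card (T x))"
    using fin MA by (simp add: sum.remove)
  also have "(\<Sum>x\<in>A - {M}. card (T x)) = (\<Sum>x\<in>A - {M}. stirling m k)"
    by (rule sum.cong) (auto simp: cT)
  also have "\<dots> = m * stirling m k" using cm[OF MA] by simp
  also have "card (T M) = (if k = 0 then 0 else stirling m (k - 1))" using cT[OF MA] by simp
  finally have "card {xs \<in> permutations_of_set A. lr {} xs = k} = (if k = 0 then 0 else stirling m (k - 1)) + m * stirling m k" .
  moreover have "stirling (Suc m) k = (if k = 0 then 0 else stirling m (k - 1)) + m * stirling m k"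
    by (cases k; cases m) auto
  ultimately show ?case using Suc.hyps(2) by simp
qed

lemma count_g:
  assumes "p \<le> n"
  shows "card {\<sigma> \<in> permutations_of_set {1..n}. g {} \<sigma> = p} = stirling n (n - p)"
proof -
  have "{\<sigma> \<in> permutations_of_set {1..n}. g {} \<sigma> = p} = {\<sigma> \<in> permutations_of_set {1..n}. lr {} \<sigma> = n - p}"
  proof (intro Collect_cong conj_cong refl)
    fix \<sigma> assume "\<sigma> \<in> permutations_of_set {1..n}"
    then have "length \<sigma> = n" by (metis permutations_of_setD card_atLeastAtMost diff_Suc_1 distinct_card)
    then show "(g {} \<sigma> = p) = (lr {} \<sigma> = n - p)" using g_lr[of "{}" \<sigma>] assms by auto
  qed
  then show ?thesis using count_lr[of "{1..n}" "n - p"] by simp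
qed



definition TT :: "nat \<Rightarrow> nat \<Rightarrow> real" where
  "TT a M = (\<Sum>j\<le>M. (-1)^j * real (M choose j) * real (M - j) ^ a)"

lemma TT_0: "TT 0 M = (if M = 0 then 1 else 0)"
  unfolding TT_def using choose_alternating_sum[of M, where 'a=real] by (cases "M = 0") auto

lemma TT_Suc_0: "TT (Suc a) 0 = 0"
  unfolding TT_def by simp

lemma TT_rec: "TT (Suc a) (Suc m) = real (Suc m) * (TT a (Suc m) + TT a m)"
proof -
  define U where "U = (\<Sum>j\<le>Suc m. (-1)^j * real (m choose j) * real (Suc m - j) ^ a)"
  have "TT (Suc a) (Suc m) = (\<Sum>j\<le>Suc m. (-1)^j * real ((Suc m - j) * (Suc m choose j)) * real (Suc m - j) ^ a)"
  proof -
    have ax: "\<And>(s::real) c d. s * c * d ^ Suc a = s * (d * c) * d ^ a" by (simp add: algebra_simps)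
    show ?thesis unfolding TT_def by (intro sum.cong refl) (simp only: of_nat_mult ax)
  qed
  also have "\<dots> = (\<Sum>j\<le>Suc m. (-1)^j * real (Suc m * (m choose j)) * real (Suc m - j) ^ a)"
    by (simp only: binomial_absorb_comp diff_Suc_1)
  also have "\<dots> = real (Suc m) * U"
    unfolding U_def by (simp add: sum_distrib_left algebra_simps)
  finally have 1: "TT (Suc a) (Suc m) = real (Suc m) * U" .
  have 2: "TT a (Suc m) = real (Suc m) ^ a + (\<Sum>j\<le>m. (-1)^(Suc j) * real (Suc m choose Suc j) * real (m - j) ^ a)"
    unfolding TT_def sum.atMost_Suc_shift by (simp del: binomial_Suc_Suc)
  have 3: "U = real (Suc m) ^ a + (\<Sum>j\<le>m. (-1)^(Suc j) * real (m choose Suc j) * real (m - j) ^ a)"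
    unfolding U_def sum.atMost_Suc_shift by simp
  have 4: "(\<Sum>j\<le>m. (-1)^(Suc j) * real (Suc m choose Suc j) * real (m - j) ^ a)
     = (\<Sum>j\<le>m. (-1)^(Suc j) * real (m choose Suc j) * real (m - j) ^ a) - TT a m"
  proof -
    have "(\<Sum>j\<le>m. (-1)^(Suc j) * real (Suc m choose Suc j) * real (m - j) ^ a)
      = (\<Sum>j\<le>m. (-1)^(Suc j) * real (m choose Suc j) * real (m - j) ^ a - (-1)^j * real (m choose j) * real (m - j) ^ a)"
      by (intro sum.cong refl) (simp add: algebra_simps)
    also have "\<dots> = (\<Sum>j\<le>m. (-1)^(Suc j) * real (m choose Suc j) * real (m - j) ^ a) - TT a m"
      unfolding TT_def by (rule sum_subtractf)
    finally show ?thesis .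
  qed
  have "U = TT a (Suc m) + TT a m" using 2 3 4 by simp
  then show ?thesis using 1 by simp
qed

lemma TT_Stirling: "TT a M = fact M * real (Stirling a M)"
proof (induct a arbitrary: M)
  case 0 then show ?case by (simp add: TT_0)
next
  case (Suc a)
  show ?case
  proof (cases M)
    case 0 then show ?thesis by (simp add: TT_Suc_0)
  next
    case (Suc m)
    have "TT (Suc a) (Suc m) = real (Suc m) * (fact (Suc m) * real (Stirling a (Suc m)) + fact m * real (Stirling a m))"
      using TT_rec Suc.hyps by simp
    also have "\<dots> = fact (Suc m) * real (Stirling (Suc a) (Suc m))"
      by (simp add: algebra_simps)
    finally show ?thesis using Suc by simp
  qed
qed

lemma inner_S2:
  "(\<Sum>j=0..m. (-1)^j * real (m choose j) * (real j - real m)^(p+m) / fact m)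
     = (-1)^(p+m) * real (Stirling (p+m) m)"
proof -
  have "(\<Sum>j=0..m. (-1)^j * real (m choose j) * (real j - real m)^(p+m) / fact m)
      = (\<Sum>j\<le>m. ((-1)^(p+m) / fact m) * ((-1)^j * real (m choose j) * real (m - j)^(p+m)))"
  proof (intro sum.cong)
    fix j assume "j \<in> {..m}"
    then have eq: "real j - real m = - real (m - j)" by (simp add: of_nat_diff)
    have e: "(real j - real m)^(p+m) = (-1)^(p+m) * real (m - j)^(p+m)"
      unfolding eq by (rule power_minus)
    show "(-1)^j * real (m choose j) * (real j - real m)^(p+m) / fact m
       = ((-1)^(p+m) / fact m) * ((-1)^j * real (m choose j) * real (m - j)^(p+m))"
      by (simp only: e) (simp add: field_simps)
  qed (simp add: atLeast0AtMost)
  also have "\<dots> = ((-1)^(p+m) / fact m) * TT (p+m) m"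
    unfolding TT_def by (simp add: sum_distrib_left)
  finally show ?thesis by (simp add: TT_Stirling)
qed



definition bp :: "real \<Rightarrow> nat \<Rightarrow> real poly" where
  "bp a k = smult (1 / fact k) (\<Prod>i<k. [:a - real i, 1:])"

lemma poly_bp: "poly (bp a k) x = (x + a) gchoose k"
  unfolding bp_def gbinomial_prod_rev
  by (simp add: poly_prod atLeast0LessThan algebra_simps divide_inverse)

lemma degree_bp: "degree (bp a k) \<le> k"
proof -
  have "degree (\<Prod>i<k. [:a - real i, 1:]) \<le> (\<Sum>i<k. degree [:a - real i, 1:])"
    using degree_prod_sum_le[of "{..<k}" "\<lambda>i. [:a - real i, 1:]"] by (simp add: o_def)
  also have "\<dots> = k" by simp
  finally show ?thesis unfolding bp_def using degree_smult_le order_trans by blast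
qed

definition cc :: "nat \<Rightarrow> nat \<Rightarrow> nat \<Rightarrow> real" where
  "cc p h j = (-1)^j * real (h choose j) * (real j - real h)^(p+h) / fact h"

definition Fr :: "nat \<Rightarrow> real \<Rightarrow> real" where
  "Fr p x = (\<Sum>h=0..p. \<Sum>j=0..h. (-1)^j * real (h choose j) * ((x - 1 + real h) gchoose (p+h))
              * ((x + real p) gchoose (p-h)) * (real j - real h)^(p+h) / fact h)"

definition FP :: "nat \<Rightarrow> real poly" where
  "FP p = (\<Sum>h=0..p. \<Sum>j=0..h. smult (cc p h j) (bp (real h - 1) (p+h) * bp (real p) (p-h)))"

lemma poly_FP: "poly (FP p) x = Fr p x"
  unfolding FP_def Fr_def cc_def
  by (simp add: poly_sum poly_bp algebra_simps)

lemma degree_FP: "degree (FP p) \<le> 2 * p"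
  unfolding FP_def
proof (intro degree_sum_le)
  fix h j assume h: "h \<in> {0..p}"
  have "degree (bp (real h - 1) (p+h) * bp (real p) (p-h)) \<le> (p+h) + (p-h)"
    using degree_mult_le[of "bp (real h - 1) (p+h)" "bp (real p) (p-h)"] degree_bp[of "real h - 1" "p+h"]
      degree_bp[of "real p" "p-h"] by linarith
  also have "\<dots> = 2 * p" using h by simp
  finally show "degree (smult (cc p h j) (bp (real h - 1) (p+h) * bp (real p) (p-h))) \<le> 2 * p"
    using degree_smult_le order_trans by blast
qed simp_all

lemma deg_shift:
  fixes q :: "real poly"
  assumes "degree q \<le> Suc d"
  shows "degree (pcompose q [:1,1:] - q) \<le> d"
proof (cases "degree q = 0")
  case True
  then have "q = [:coeff q 0:]" using degree_0_id by metis
  then have "pcompose q [:1,1:] = q" by (metis pcompose_const)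
  then show ?thesis by simp
next
  case False
  define k where "k = degree q"
  have dk: "degree (pcompose q [:1,1:]) = k" unfolding k_def by (simp add: degree_pcompose)
  have lk: "coeff (pcompose q [:1,1:]) k = coeff q k"
    using lead_coeff_comp[of "[:1,1:]" q] dk unfolding k_def by simp
  have "degree (pcompose q [:1,1:] - q) \<le> k - 1"
  proof (rule degree_le, intro allI impI)
    fix i assume "k - 1 < i"
    then have "i = k \<or> k < i" using False k_def by linarith
    then show "coeff (pcompose q [:1,1:] - q) i = 0"
    proof
      assume "i = k" then show ?thesis using lk by simp
    next
      assume "k < i" then show ?thesis using dk k_def by (simp add: coeff_eq_0)
    qed
  qed
  then show ?thesis using assms k_def by linarith
qed

lemma poly_zero_many_roots:
  fixes V :: "real poly"
  assumes "finite Z" "degree V < card Z" "\<forall>z\<in>Z. poly V z = 0"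
  shows "V = 0"
proof (rule ccontr)
  assume "V \<noteq> 0"
  then have "card Z \<le> card {x. poly V x = 0}"
    using assms by (intro card_mono poly_roots_finite) auto
  also have "\<dots> \<le> degree V" using card_poly_roots_bound \<open>V \<noteq> 0\<close> by blast
  finally show False using assms by simp
qed



lemma gch_nat_zero: "k < j \<Longrightarrow> (real k) gchoose j = 0"
  by (metis binomial_eq_0 binomial_gbinomial of_nat_0)

lemma Fr_zero_nat:
  assumes "1 \<le> p" "i \<le> p"
  shows "Fr p (real i) = 0"
  unfolding Fr_def
proof (intro sum.neutral ballI)
  fix h j assume h: "h \<in> {0..p}" and j: "j \<in> {0..h}"
  show "(-1)^j * real (h choose j) * ((real i - 1 + real h) gchoose (p+h))
              * ((real i + real p) gchoose (p-h)) * (real j - real h)^(p+h) / fact h = 0"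
  proof (cases "i + h = 0")
    case True
    then have "j = 0" "h = 0" using j by auto
    then show ?thesis using assms by simp
  next
    case False
    then have eq: "real i - 1 + real h = real (i + h - 1)" by (subst of_nat_diff) auto
    have lt: "i + h - 1 < p + h" using assms False by linarith
    have "(real i - 1 + real h) gchoose (p+h) = 0" unfolding eq using gch_nat_zero[OF lt] .
    then show ?thesis by simp
  qed
qed

lemma gch_minus1: "(-1 :: real) gchoose k = (-1)^k"
  using gbinomial_minus[of "1::real" k] by (simp add: gbinomial_binomial[symmetric] binomial_gbinomial[symmetric])

lemma Fr_neg_small:
  assumes "m \<le> p"
  shows "Fr p (- real m) = real (Stirling (p+m) m)"
proof -
  have "Fr p (- real m) = (\<Sum>h=0..p. if h = m then
      (\<Sum>j=0..h. (-1)^j * real (h choose j) * (real j - real h)^(p+h) / fact h) * (-1)^(p+m) else 0)"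
    unfolding Fr_def
  proof (intro sum.cong refl)
    fix h assume h: "h \<in> {0..p}"
    show "(\<Sum>j=0..h. (-1)^j * real (h choose j) * ((- real m - 1 + real h) gchoose (p+h))
              * ((- real m + real p) gchoose (p-h)) * (real j - real h)^(p+h) / fact h)
        = (if h = m then (\<Sum>j=0..h. (-1)^j * real (h choose j) * (real j - real h)^(p+h) / fact h) * (-1)^(p+m) else 0)"
    proof (cases "h < m")
      case True
      have eq: "- real m + real p = real (p - m)" using assms by (simp add: of_nat_diff)
      have lt: "p - m < p - h" using True assms by linarith
      have "(- real m + real p) gchoose (p-h) = 0" unfolding eq using gch_nat_zero[OF lt] .
      then show ?thesis using True by simp
    next
      case False
      show ?thesis
      proof (cases "h = m")
        case True
        have e1: "- real m - 1 + real h = -1" using True by simp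
        have 1: "(- real m - 1 + real h) gchoose (p+h) = (-1)^(p+m)" unfolding e1 using gch_minus1[of "p+h"] True by simp
        have e2: "- real m + real p = real (p - h)" using assms True by (simp add: of_nat_diff)
        have 2: "(- real m + real p) gchoose (p-h) = 1"
          unfolding e2 binomial_gbinomial[symmetric] by simp
        have "(\<Sum>j=0..h. (-1)^j * real (h choose j) * ((- real m - 1 + real h) gchoose (p+h))
              * ((- real m + real p) gchoose (p-h)) * (real j - real h)^(p+h) / fact h)
           = (\<Sum>j=0..h. ((-1)^j * real (h choose j) * (real j - real h)^(p+h) / fact h) * (-1)^(p+m))"
          unfolding 1 2 by (intro sum.cong refl) (simp add: algebra_simps)
        also have "\<dots> = (\<Sum>j=0..h. (-1)^j * real (h choose j) * (real j - real h)^(p+h) / fact h) * (-1)^(p+m)"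
          by (rule sum_distrib_right[symmetric])
        finally show ?thesis using True by simp
      next
        case False2: False
        with False have hm: "m < h" by simp
        then have eq: "- real m - 1 + real h = real (h - m - 1)" by (simp add: of_nat_diff)
        have lt: "h - m - 1 < p + h" using hm by arith
        have "(- real m - 1 + real h) gchoose (p+h) = 0" unfolding eq using gch_nat_zero[OF lt] .
        then show ?thesis using hm by simp
      qed
    qed
  qed
  also have "\<dots> = (\<Sum>j=0..m. (-1)^j * real (m choose j) * (real j - real m)^(p+m) / fact m) * (-1)^(p+m)"
    using assms by (simp add: sum.delta)
  also have "\<dots> = real (Stirling (p+m) m)" by (simp add: inner_S2 flip: power_add)
  finally show ?thesis .
qed

lemma Fr_0: "Fr 0 x = 1"
  unfolding Fr_def by simp

definition TS :: "nat \<Rightarrow> nat \<Rightarrow> real" where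
  "TS p n = (if p \<le> n then real (stirling n (n - p)) else 0)"

lemma TS_rec: "TS (Suc q) (Suc n) = TS (Suc q) n + real n * TS q n"
proof (cases "Suc q \<le> n")
  case True
  then have "Suc n - Suc q = Suc (n - Suc q)" "n - q = Suc (n - Suc q)" by auto
  then show ?thesis using True unfolding TS_def by simp
next
  case False
  then show ?thesis unfolding TS_def
    by (cases "q = n"; cases n) auto
qed

lemma main_C: "(\<forall>m. Fr p (- real m) = real (Stirling (p+m) m)) \<and> (\<forall>n. Fr p (real n) = TS p n)"
proof (induct p)
  case 0 then show ?case by (simp add: Fr_0 TS_def)
next
  case (Suc q)
  define p where "p = Suc q"
  have IHm: "Fr q (- real m) = real (Stirling (q+m) m)" for m using Suc by blast
  have IHn: "Fr q (real n) = TS q n" for n using Suc by blast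
  define V where "V = pcompose (FP p) [:1,1:] - FP p - [:0,1:] * FP q"
  have polyV: "poly V x = Fr p (x + 1) - Fr p x - x * Fr q x" for x
    unfolding V_def by (simp add: poly_pcompose poly_FP algebra_simps)
  have dV: "degree V \<le> 2 * q + 1"
  proof -
    have "degree (pcompose (FP p) [:1,1:] - FP p) \<le> 2 * q + 1"
      by (rule deg_shift) (use degree_FP[of p] p_def in simp)
    moreover have "degree ([:0,1:] * FP q) \<le> 2 * q + 1"
      using degree_mult_le[of "[:0,1:]" "FP q"] degree_FP[of q] by simp
    ultimately show ?thesis unfolding V_def by (rule degree_diff_le)
  qed
  define Z where "Z = (real_of_int ` {- int p..<int p})"
  have cZ: "card Z = 2 * p" unfolding Z_def
    by (subst card_image) (auto simp: inj_on_def)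
  have roots: "\<forall>z\<in>Z. poly V z = 0"
  proof
    fix z assume "z \<in> Z"
    then obtain i where i: "i \<in> {- int p..<int p}" "z = real_of_int i" unfolding Z_def by blast
    show "poly V z = 0"
    proof (cases "i < 0")
      case True
      define m where "m = nat (- i)"
      have m: "1 \<le> m" "m \<le> p" "z = - real m" using True i unfolding m_def by auto
      have a: "z + 1 = - real (m - 1)" using m by (simp add: of_nat_diff)
      have a2: "- real m + 1 = - real (m - 1)" using m by (simp add: of_nat_diff)
      have "poly V z = Fr p (- real m + 1) - Fr p (- real m) - (- real m) * Fr q (- real m)"
        unfolding m(3) by (rule polyV)
      also have "\<dots> = Fr p (- real (m-1)) - Fr p (- real m) + real m * Fr q (- real m)"
        unfolding a2 by simp
      also have "\<dots> = real (Stirling (p + (m-1)) (m-1)) - real (Stirling (p+m) m) + real m * real (Stirling (q+m) m)"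
        unfolding Fr_neg_small[of "m-1" p, OF order_trans[OF diff_le_self m(2)]] Fr_neg_small[of m p, OF m(2)] IHm[of m] ..
      also have "\<dots> = 0"
      proof -
        obtain m' where mm: "m = Suc m'" using m by (cases m) auto
        have "Stirling (p + m) m = Stirling (Suc (q + m)) (Suc m')" unfolding p_def mm by simp
        also have "\<dots> = m * Stirling (q+m) m + Stirling (q + m) m'" unfolding mm by simp
        finally have "real (Stirling (p + m) m) = real m * real (Stirling (q+m) m) + real (Stirling (q + m) m')"
          by simp
        moreover have "p + (m - 1) = q + m" "m - 1 = m'" unfolding p_def mm by simp_all
        ultimately show ?thesis by simp
      qed
      finally show ?thesis .
    next
      case False
      define n where "n = nat i"
      have n: "n < p" "z = real n" using False i unfolding n_def by auto
      have e: "real n + 1 = real (Suc n)" by simp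
      have "poly V z = Fr p (real (Suc n)) - Fr p (real n) - real n * Fr q (real n)"
        unfolding n(2) polyV e ..
      also have "\<dots> = - real n * TS q n"
        using Fr_zero_nat[of p "Suc n"] Fr_zero_nat[of p n] IHn[of n] n p_def by simp
      also have "\<dots> = 0" unfolding TS_def using n p_def by (cases n) auto
      finally show ?thesis .
    qed
  qed
  have "V = 0"
    by (rule poly_zero_many_roots[of Z]) (use cZ dV roots p_def Z_def in auto)
  then have rec: "Fr p (x + 1) = Fr p x + x * Fr q x" for x using polyV[of x] by simp
  have pos: "Fr p (real n) = TS p n" for n
  proof (induct n)
    case 0 then show ?case using Fr_zero_nat[of p 0] p_def by (simp add: TS_def)
  next
    case (Suc n)
    have "Fr p (real (Suc n)) = Fr p (real n) + real n * Fr q (real n)" using rec[of "real n"] by (simp add: add.commute)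
    also have "\<dots> = TS p (Suc n)" using Suc IHn TS_rec unfolding p_def by simp
    finally show ?case .
  qed
  have neg: "Fr p (- real m) = real (Stirling (p+m) m)" for m
  proof (induct m)
    case 0 then show ?case using Fr_neg_small[of 0 p] by simp
  next
    case (Suc m)
    have "Fr p (- real m) = Fr p (- real (Suc m)) - real (Suc m) * Fr q (- real (Suc m))"
    proof -
      have r: "Fr p (- real (Suc m) + 1) = Fr p (- real (Suc m)) + (- real (Suc m)) * Fr q (- real (Suc m))"
        by (rule rec)
      have e: "- real (Suc m) + 1 = - real m" by simp
      have r2: "Fr p (- real m) = Fr p (- real (Suc m)) + - (real (Suc m) * Fr q (- real (Suc m)))"
        using r unfolding e mult_minus_left .
      then show ?thesis by linarith
    qed
    then have X: "Fr p (- real (Suc m)) = Fr p (- real m) + real (Suc m) * Fr q (- real (Suc m))" by linarith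
    have a1: "Fr q (- real (Suc m)) = real (Stirling (q + Suc m) (Suc m))" by (rule IHm)
    have "Fr p (- real (Suc m)) = real (Stirling (p+m) m) + real (Suc m) * real (Stirling (q + Suc m) (Suc m))"
      using X unfolding Suc a1 .
    also have "\<dots> = real (Stirling (p + Suc m) (Suc m))"
    proof -
      have e1: "p + Suc m = Suc (p + m)" "q + Suc m = p + m" unfolding p_def by simp_all
      have "Stirling (p + Suc m) (Suc m) = Suc m * Stirling (p + m) (Suc m) + Stirling (p + m) m"
        unfolding e1 by simp
      then show ?thesis unfolding e1 by (simp add: algebra_simps)
    qed
    finally show ?case .
  qed
  show ?case using pos neg unfolding p_def by blast
qed


lemma RHS_eq:
  assumes "n \<ge> 1"
  shows "(\<Sum>h=0..p. \<Sum>j=0..h.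
              (-1) ^ j * real (h choose j) * real ((n - 1 + h) choose (p + h))
              * real ((n + p) choose (p - h)) * (real j - real h) ^ (p + h) / fact h) = Fr p (real n)"
  unfolding Fr_def
proof (intro sum.cong refl)
  fix h j
  have eq: "real (n - 1 + h) = real n - 1 + real h" using assms by (simp add: of_nat_diff)
  have e1: "real ((n - 1 + h) choose (p + h)) = (real n - 1 + real h) gchoose (p + h)"
    by (simp only: binomial_gbinomial eq)
  have e2: "real ((n + p) choose (p - h)) = (real n + real p) gchoose (p - h)"
    by (simp add: binomial_gbinomial)
  show "(-1) ^ j * real (h choose j) * real ((n - 1 + h) choose (p + h))
              * real ((n + p) choose (p - h)) * (real j - real h) ^ (p + h) / fact h
      = (-1)^j * real (h choose j) * ((real n - 1 + real h) gchoose (p+h))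
              * ((real n + real p) gchoose (p-h)) * (real j - real h)^(p+h) / fact h"
    unfolding e1 e2 ..
qed

theorem mainTheorem2:
  fixes n p :: nat
  assumes "n \<ge> 1" and "p \<le> n - 1"
  shows "D n p = {\<sigma> \<in> permutations_of_set {1..n}. non_lrmax \<sigma> = p}
       \<and> card (D n p) = stirling n (n - p)
       \<and> real (card (D n p)) =
           (\<Sum>h=0..p. \<Sum>j=0..h.
              (-1) ^ j * real (h choose j) * real ((n - 1 + h) choose (p + h))
              * real ((n + p) choose (p - h)) * (real j - real h) ^ (p + h) / fact h)"
proof -
  have pn: "p \<le> n" using assms by simp
  have c: "card (D n p) = stirling n (n - p)"
    unfolding D_char nlr_g using count_g[OF pn] by simp
  have "real (card (D n p)) = Fr p (real n)"
    using c main_C[of p] pn by (simp add: TS_def)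
  then show ?thesis using D_char c RHS_eq[OF assms(1), of p] by simp
qed

end
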